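(* Let $F$ be a clause-set, and let $\mathbb{U}_F$ be the set of all $F' \subseteq F$ with $\mathrm{var}(F') = \mathrm{var}(F)$, $\delta(F') \ge 1$ and $F'$ unsatisfiable. Then $F \in \mathcal{VMU}$ if and only if $F \in \mathbb{U}_F$ and all minimal elements of $\mathbb{U}_F$ with respect to the subset relation are minimally unsatisfiable.
   Context: Literals come with a fixed-point-free involution $x \mapsto \overline{x}$; variables are positive literals. A clause is a finite set $C$ of literals with $C \cap \overline{C} = \emptyset$; a clause-set is a finite set of clauses. $\mathrm{var}(F)$, $n(F) = |\mathrm{var}(F)|$, $c(F) = |F|$, $\delta(F) = c(F) - n(F)$. $F$ is satisfiable iff some assignment of truth values makes some literal of every clause true. $F$ is minimally unsatisfiable if it is unsatisfiable and $F \setminus \{C\}$ is satisfiable for every $C \in F$. $\mathcal{VMU}$ is the class of unsatisfiable clause-sets $F$ such that every unsatisfiable $F' \subseteq F$ has $\mathrm{var}(F') = \mathrm{var}(F)$. *)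

theory Defs
  imports Main
begin

datatype 'v lit = Pos 'v | Neg 'v

fun comp :: "'v lit \<Rightarrow> 'v lit" where
  "comp (Pos v) = Neg v"
| "comp (Neg v) = Pos v"

fun var_lit :: "'v lit \<Rightarrow> 'v" where
  "var_lit (Pos v) = v"
| "var_lit (Neg v) = v"

type_synonym 'v clause = "'v lit set"
type_synonym 'v clauseset = "'v clause set"

definition is_clause :: "'v clause \<Rightarrow> bool" where
  "is_clause C \<longleftrightarrow> finite C \<and> C \<inter> comp ` C = {}"

definition is_clauseset :: "'v clauseset \<Rightarrow> bool" where
  "is_clauseset F \<longleftrightarrow> finite F \<and> (\<forall>C\<in>F. is_clause C)"

definition var :: "'v clauseset \<Rightarrow> 'v set" where
  "var F = (\<Union>C\<in>F. var_lit ` C)"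

definition n_vars :: "'v clauseset \<Rightarrow> nat" where
  "n_vars F = card (var F)"

definition c_clauses :: "'v clauseset \<Rightarrow> nat" where
  "c_clauses F = card F"

definition deficiency :: "'v clauseset \<Rightarrow> int" where
  "deficiency F = int (c_clauses F) - int (n_vars F)"

fun lit_true :: "('v \<Rightarrow> bool) \<Rightarrow> 'v lit \<Rightarrow> bool" where
  "lit_true \<phi> (Pos v) = \<phi> v"
| "lit_true \<phi> (Neg v) = (\<not> \<phi> v)"

definition satisfiable :: "'v clauseset \<Rightarrow> bool" where
  "satisfiable F \<longleftrightarrow> (\<exists>\<phi>. \<forall>C\<in>F. \<exists>x\<in>C. lit_true \<phi> x)"

definition minimally_unsat :: "'v clauseset \<Rightarrow> bool" where
  "minimally_unsat F \<longleftrightarrow> \<not> satisfiable F \<and> (\<forall>C\<in>F. satisfiable (F - {C}))"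

definition VMU :: "'v clauseset \<Rightarrow> bool" where
  "VMU F \<longleftrightarrow> \<not> satisfiable F \<and>
     (\<forall>F'. F' \<subseteq> F \<and> \<not> satisfiable F' \<longrightarrow> var F' = var F)"

definition UF :: "'v clauseset \<Rightarrow> 'v clauseset set" where
  "UF F = {F'. F' \<subseteq> F \<and> var F' = var F \<and> deficiency F' \<ge> 1 \<and> \<not> satisfiable F'}"

end

theory Submission
  imports Defs
begin

lemma var_Un: "var (A \<union> B) = var A \<union> var B"
  by (auto simp: var_def)

lemma var_mono: "A \<subseteq> B \<Longrightarrow> var A \<subseteq> var B"
  by (auto simp: var_def)

lemma var_empty[simp]: "var {} = {}"
  by (auto simp: var_def)

lemma var_single: "var {C} = var_lit ` C"
  by (auto simp: var_def)

lemma var_finite: "finite F \<Longrightarrow> (\<forall>C\<in>F. finite C) \<Longrightarrow> finite (var F)"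
  by (auto simp: var_def)

lemma lit_true_cong: "\<phi> (var_lit x) = \<psi> (var_lit x) \<Longrightarrow> lit_true \<phi> x = lit_true \<psi> x"
  by (cases x) auto

lemma sat_mono: "G \<subseteq> F \<Longrightarrow> satisfiable F \<Longrightarrow> satisfiable G"
  unfolding satisfiable_def by blast

lemma hall_sat:
  "finite F \<Longrightarrow> (\<forall>C\<in>F. finite C) \<Longrightarrow> (\<forall>T\<subseteq>F. card T \<le> card (var T - W))
   \<Longrightarrow> \<exists>\<phi>. \<forall>C\<in>F. \<exists>x\<in>C. var_lit x \<notin> W \<and> lit_true \<phi> x"
proof (induction "card F" arbitrary: F W rule: less_induct)
  case less
  note fin = less.prems(1) and finC = less.prems(2) and hall = less.prems(3)
  show ?case
  proof (cases "F = {}")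
    case True then show ?thesis by simp
  next
    case False
    show ?thesis
    proof (cases "\<exists>T. T \<noteq> {} \<and> T \<subset> F \<and> card (var T - W) \<le> card T")
      case True
      then obtain T where T: "T \<noteq> {}" "T \<subset> F" "card (var T - W) \<le> card T" by blast
      have finT: "finite T" using T(2) fin by (meson finite_subset psubset_imp_subset)
      have "\<exists>\<phi>. \<forall>C\<in>T. \<exists>x\<in>C. var_lit x \<notin> W \<and> lit_true \<phi> x"
      proof (rule less.hyps)
        show "card T < card F" using T(2) fin by (rule psubset_card_mono[rotated])
        show "finite T" by (rule finT)
        show "\<forall>C'\<in>T. finite C'" using finC T(2) by blast
        show "\<forall>U\<subseteq>T. card U \<le> card (var U - W)" using hall T(2) by blast
      qed
      then obtain \<phi>1 where phi1: "\<forall>C\<in>T. \<exists>x\<in>C. var_lit x \<notin> W \<and> lit_true \<phi>1 x" by blast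
      have hall2: "\<forall>U\<subseteq>F - T. card U \<le> card (var U - (W \<union> var T))"
      proof (intro allI impI)
        fix U assume U: "U \<subseteq> F - T"
        have finU: "finite U" using U fin by (meson finite_Diff finite_subset)
        have "T \<union> U \<subseteq> F" using U T by auto
        then have h: "card (T \<union> U) \<le> card (var (T \<union> U) - W)" using hall by blast
        have e: "var (T \<union> U) - W = (var T - W) \<union> (var U - (W \<union> var T))"
          by (auto simp: var_def)
        have fvT: "finite (var T)" using var_finite[of T] finT finC T(2) by auto
        have fvU: "finite (var U)" using var_finite[of U] finU finC U by auto
        have c1: "card (T \<union> U) = card T + card U"
          using card_Un_disjoint[OF finT finU] U by auto
        have c2: "card (var (T \<union> U) - W) = card (var T - W) + card (var U - (W \<union> var T))"
          unfolding e by (rule card_Un_disjoint) (use fvT fvU in auto)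
        show "card U \<le> card (var U - (W \<union> var T))" using h c1 c2 T(3) by linarith
      qed
      have "\<exists>\<phi>. \<forall>C\<in>F - T. \<exists>x\<in>C. var_lit x \<notin> W \<union> var T \<and> lit_true \<phi> x"
      proof (rule less.hyps)
        have "F - T \<subset> F" using T by blast
        then show "card (F - T) < card F" using fin by (rule psubset_card_mono[rotated])
        show "finite (F - T)" using fin by simp
        show "\<forall>C'\<in>F - T. finite C'" using finC by simp
        show "\<forall>U\<subseteq>F - T. card U \<le> card (var U - (W \<union> var T))" by (rule hall2)
      qed
      then obtain \<phi>2 where phi2: "\<forall>C\<in>F - T. \<exists>x\<in>C. var_lit x \<notin> W \<union> var T \<and> lit_true \<phi>2 x"
        by blast
      define \<phi> where "\<phi> = (\<lambda>v. if v \<in> var T then \<phi>1 v else \<phi>2 v)"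
      have "\<forall>C\<in>F. \<exists>x\<in>C. var_lit x \<notin> W \<and> lit_true \<phi> x"
      proof
        fix C assume C: "C \<in> F"
        show "\<exists>x\<in>C. var_lit x \<notin> W \<and> lit_true \<phi> x"
        proof (cases "C \<in> T")
          case True
          then obtain x where x: "x \<in> C" "var_lit x \<notin> W" "lit_true \<phi>1 x" using phi1 by blast
          have "var_lit x \<in> var T" using x True by (auto simp: var_def)
          then have "lit_true \<phi> x = lit_true \<phi>1 x" by (intro lit_true_cong) (simp add: \<phi>_def)
          then show ?thesis using x by blast
        next
          case False
          then obtain x where x: "x \<in> C" "var_lit x \<notin> W \<union> var T" "lit_true \<phi>2 x"
            using phi2 C by blast
          then have "lit_true \<phi> x = lit_true \<phi>2 x" by (intro lit_true_cong) (simp add: \<phi>_def)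
          then show ?thesis using x by blast
        qed
      qed
      then show ?thesis by blast
    next
      case False
      note strict = False
      obtain C where C: "C \<in> F" using \<open>F \<noteq> {}\<close> by blast
      have "{C} \<subseteq> F" using C by simp
      then have "card {C} \<le> card (var {C} - W)" using hall by blast
      then have "1 \<le> card (var_lit ` C - W)" by (simp add: var_single)
      then have "var_lit ` C - W \<noteq> {}" by (intro notI) simp
      then obtain x where x: "x \<in> C" "var_lit x \<notin> W" by blast
      define v where "v = var_lit x"
      have hall2: "\<forall>T\<subseteq>F - {C}. card T \<le> card (var T - insert v W)"
      proof (intro allI impI)
        fix T assume T: "T \<subseteq> F - {C}"
        show "card T \<le> card (var T - insert v W)"
        proof (cases "T = {}")
          case True then show ?thesis by simp
        next
          case False
          have "T \<subset> F" using T C by auto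
          then have "\<not> card (var T - W) \<le> card T" using strict False by blast
          then have lt: "card T < card (var T - W)" by simp
          have finT: "finite T" using T fin by (meson finite_Diff finite_subset)
          have fvT: "finite (var T)" using var_finite[of T] finT finC T by auto
          have "var T - W \<subseteq> insert v (var T - insert v W)" by auto
          then have "card (var T - W) \<le> card (insert v (var T - insert v W))"
            using fvT by (intro card_mono) auto
          also have "\<dots> \<le> card (var T - insert v W) + 1"
            by (simp add: card_insert_if fvT)
          finally show ?thesis using lt by linarith
        qed
      qed
      have "\<exists>\<phi>. \<forall>C'\<in>F - {C}. \<exists>y\<in>C'. var_lit y \<notin> insert v W \<and> lit_true \<phi> y"
      proof (rule less.hyps)
        show "card (F - {C}) < card F" using C fin by (rule card_Diff1_less[rotated])
        show "finite (F - {C})" using fin by simp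
        show "\<forall>C'\<in>F - {C}. finite C'" using finC by simp
        show "\<forall>T\<subseteq>F - {C}. card T \<le> card (var T - insert v W)" by (rule hall2)
      qed
      then obtain \<phi>2 where phi2: "\<forall>C'\<in>F - {C}. \<exists>y\<in>C'. var_lit y \<notin> insert v W \<and> lit_true \<phi>2 y"
        by blast
      define \<phi> where "\<phi> = \<phi>2(v := (case x of Pos _ \<Rightarrow> True | Neg _ \<Rightarrow> False))"
      have xt: "lit_true \<phi> x" unfolding \<phi>_def v_def by (cases x) auto
      have "\<forall>C'\<in>F. \<exists>y\<in>C'. var_lit y \<notin> W \<and> lit_true \<phi> y"
      proof
        fix C' assume C': "C' \<in> F"
        show "\<exists>y\<in>C'. var_lit y \<notin> W \<and> lit_true \<phi> y"
        proof (cases "C' = C")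
          case True then show ?thesis using x xt by blast
        next
          case False
          then obtain y where y: "y \<in> C'" "var_lit y \<notin> insert v W" "lit_true \<phi>2 y"
            using phi2 C' by blast
          then have "lit_true \<phi> y = lit_true \<phi>2 y" by (intro lit_true_cong) (simp add: \<phi>_def)
          then show ?thesis using y by blast
        qed
      qed
      then show ?thesis by blast
    qed
  qed
qed

lemma sat_combine:
  assumes "\<forall>C\<in>S. \<exists>x\<in>C. lit_true \<phi>1 x"
    and "\<forall>C\<in>R. \<exists>x\<in>C. var_lit x \<notin> var S \<and> lit_true \<phi>2 x"
  shows "satisfiable (S \<union> R)"
proof -
  define \<phi> where "\<phi> = (\<lambda>v. if v \<in> var S then \<phi>1 v else \<phi>2 v)"
  have "\<forall>C\<in>S \<union> R. \<exists>x\<in>C. lit_true \<phi> x"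
  proof
    fix C assume C: "C \<in> S \<union> R"
    show "\<exists>x\<in>C. lit_true \<phi> x"
    proof (cases "C \<in> S")
      case True
      then obtain x where x: "x \<in> C" "lit_true \<phi>1 x" using assms(1) by blast
      have "var_lit x \<in> var S" using x True by (auto simp: var_def)
      then have "lit_true \<phi> x = lit_true \<phi>1 x" by (intro lit_true_cong) (simp add: \<phi>_def)
      then show ?thesis using x by blast
    next
      case False
      then obtain x where x: "x \<in> C" "var_lit x \<notin> var S" "lit_true \<phi>2 x"
        using assms(2) C by blast
      then have "lit_true \<phi> x = lit_true \<phi>2 x" by (intro lit_true_cong) (simp add: \<phi>_def)
      then show ?thesis using x by blast
    qed
  qed
  then show ?thesis unfolding satisfiable_def by blast
qed

lemma tarsi:
  assumes cs: "is_clauseset F" and mu: "minimally_unsat F"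
  shows "card (var F) < card F"
proof (rule ccontr)
  assume "\<not> card (var F) < card F"
  then have le: "card F \<le> card (var F)" by simp
  have fin: "finite F" and finC: "\<forall>C\<in>F. finite C"
    using cs by (auto simp: is_clauseset_def is_clause_def)
  define s where "s S = int (card S) - int (card (var S))" for S :: "'a clauseset"
  define m where "m = Max (s ` Pow F)"
  have finP: "finite (s ` Pow F)" using fin by simp
  have maxs: "\<And>S. S \<subseteq> F \<Longrightarrow> s S \<le> m"
    unfolding m_def using finP by (intro Max_ge) auto
  have "m \<in> s ` Pow F" unfolding m_def using finP by (intro Max_in) auto
  then obtain S0 where S0: "S0 \<subseteq> F" "s S0 = m" by auto
  have Fne: "F \<noteq> {}" using mu by (auto simp: minimally_unsat_def satisfiable_def)
  obtain S where S: "S \<subseteq> F" "S \<noteq> F" "s S = m"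
  proof (cases "S0 = F")
    case True
    have "s {} = 0" by (simp add: s_def)
    moreover have "s F \<le> 0" using le by (simp add: s_def)
    moreover have "s {} \<le> m" using maxs by simp
    ultimately have "s {} = m" using S0 True by simp
    then show ?thesis using that Fne by blast
  next
    case False then show ?thesis using that S0 by blast
  qed
  have finS: "finite S" using S fin by (meson finite_subset)
  have fvS: "finite (var S)" using var_finite[of S] finS finC S by auto
  have hall: "\<forall>U\<subseteq>F - S. card U \<le> card (var U - var S)"
  proof (intro allI impI)
    fix U assume U: "U \<subseteq> F - S"
    have finU: "finite U" using U fin by (meson finite_Diff finite_subset)
    have fvU: "finite (var U)" using var_finite[of U] finU finC U by auto
    have "S \<union> U \<subseteq> F" using U S by auto
    then have h: "s (S \<union> U) \<le> s S" using maxs S by simp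
    have c1: "card (S \<union> U) = card S + card U"
      using card_Un_disjoint[OF finS finU] U by auto
    have e: "var (S \<union> U) = var S \<union> (var U - var S)" by (auto simp: var_def)
    have c2: "card (var (S \<union> U)) = card (var S) + card (var U - var S)"
      unfolding e using fvS fvU by (intro card_Un_disjoint) auto
    show "card U \<le> card (var U - var S)" using h c1 c2 unfolding s_def by linarith
  qed
  have "\<exists>\<phi>. \<forall>C\<in>F - S. \<exists>x\<in>C. var_lit x \<notin> var S \<and> lit_true \<phi> x"
    using hall_sat[of "F - S" "var S"] fin finC hall by auto
  then obtain \<phi>2 where phi2: "\<forall>C\<in>F - S. \<exists>x\<in>C. var_lit x \<notin> var S \<and> lit_true \<phi>2 x"
    by blast
  obtain C where C: "C \<in> F" "C \<notin> S" using S by blast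
  have "satisfiable (F - {C})" using mu C by (auto simp: minimally_unsat_def)
  moreover have "S \<subseteq> F - {C}" using S C by auto
  ultimately have "satisfiable S" using sat_mono by blast
  then obtain \<phi>1 where "\<forall>C\<in>S. \<exists>x\<in>C. lit_true \<phi>1 x" unfolding satisfiable_def by blast
  from sat_combine[OF this phi2] have "satisfiable (S \<union> (F - S))" .
  moreover have "S \<union> (F - S) = F" using S by auto
  ultimately show False using mu by (simp add: minimally_unsat_def)
qed

lemma tarsi_def: "is_clauseset F \<Longrightarrow> minimally_unsat F \<Longrightarrow> deficiency F \<ge> 1"
  using tarsi[of F] by (simp add: deficiency_def c_clauses_def n_vars_def)

lemma exists_mu:
  assumes "finite F" "\<not> satisfiable F"
  shows "\<exists>G\<subseteq>F. minimally_unsat G"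
proof -
  obtain G where G: "G \<subseteq> F \<and> \<not> satisfiable G"
    and min: "\<forall>H. H \<subseteq> F \<and> \<not> satisfiable H \<longrightarrow> card G \<le> card H"
    using ex_has_least_nat[of "\<lambda>G. G \<subseteq> F \<and> \<not> satisfiable G" F card] assms by blast
  have "minimally_unsat G"
    unfolding minimally_unsat_def
  proof (intro conjI ballI)
    show "\<not> satisfiable G" using G by blast
  next
    fix C assume C: "C \<in> G"
    show "satisfiable (G - {C})"
    proof (rule ccontr)
      assume "\<not> satisfiable (G - {C})"
      then have "card G \<le> card (G - {C})" using min G by blast
      moreover have "finite G" using G assms(1) by (meson finite_subset)
      ultimately show False using C card_Diff1_less[of G C] by simp
    qed
  qed
  then show ?thesis using G by blast
qed

lemma mu_var_remove:
  assumes mu: "minimally_unsat M" and C: "C \<in> M"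
  shows "var (M - {C}) = var M"
proof (rule ccontr)
  assume "var (M - {C}) \<noteq> var M"
  moreover have "var (M - {C}) \<subseteq> var M" by (rule var_mono) auto
  ultimately obtain v where v: "v \<in> var M" "v \<notin> var (M - {C})" by blast
  then have "v \<in> var_lit ` C" using C by (auto simp: var_def)
  then obtain x where x: "x \<in> C" "var_lit x = v" by blast
  obtain \<phi> where phi: "\<forall>C'\<in>M - {C}. \<exists>y\<in>C'. lit_true \<phi> y"
    using mu C by (auto simp: minimally_unsat_def satisfiable_def)
  define \<psi> where "\<psi> = \<phi>(v := (case x of Pos _ \<Rightarrow> True | Neg _ \<Rightarrow> False))"
  have "\<forall>C'\<in>M. \<exists>y\<in>C'. lit_true \<psi> y"
  proof
    fix C' assume C': "C' \<in> M"
    show "\<exists>y\<in>C'. lit_true \<psi> y"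
    proof (cases "C' = C")
      case True
      have "lit_true \<psi> x" unfolding \<psi>_def using x(2) by (cases x) auto
      then show ?thesis using x True by blast
    next
      case False
      then obtain y where y: "y \<in> C'" "lit_true \<phi> y" using phi C' by blast
      have "var_lit y \<in> var (M - {C})" using y C' False by (auto simp: var_def)
      then have "var_lit y \<noteq> v" using v by blast
      then have "lit_true \<psi> y = lit_true \<phi> y" by (intro lit_true_cong) (simp add: \<psi>_def)
      then show ?thesis using y by blast
    qed
  qed
  then have "satisfiable M" unfolding satisfiable_def by blast
  then show False using mu by (simp add: minimally_unsat_def)
qed

theorem lemma4p5:
  fixes F :: "'v clauseset"
  assumes "is_clauseset F"
  shows "VMU F \<longleftrightarrow>
           (F \<in> UF F \<and>
            (\<forall>F'\<in>UF F. (\<not> (\<exists>F''\<in>UF F. F'' \<subset> F')) \<longrightarrow> minimally_unsat F'))"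
proof -
  have fin: "finite F" using assms by (simp add: is_clauseset_def)
  have csub: "\<And>G. G \<subseteq> F \<Longrightarrow> is_clauseset G"
    using assms by (auto simp: is_clauseset_def intro: finite_subset)
  have defmono: "\<And>G H. G \<subseteq> H \<Longrightarrow> H \<subseteq> F \<Longrightarrow> var G = var H \<Longrightarrow> deficiency G \<le> deficiency H"
  proof -
    fix G H assume "G \<subseteq> H" "H \<subseteq> F" "var G = var H"
    moreover have "finite H" using \<open>H \<subseteq> F\<close> fin by (meson finite_subset)
    ultimately have "card G \<le> card H" by (intro card_mono)
    then show "deficiency G \<le> deficiency H" using \<open>var G = var H\<close>
      by (simp add: deficiency_def c_clauses_def n_vars_def)
  qed
  show ?thesis
  proof
    assume V: "VMU F"
    have unsat: "\<not> satisfiable F" using V by (simp add: VMU_def)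
    have key: "\<And>F'. F' \<subseteq> F \<Longrightarrow> \<not> satisfiable F' \<Longrightarrow> \<exists>G\<subseteq>F'. minimally_unsat G \<and> G \<in> UF F"
    proof -
      fix F' assume F': "F' \<subseteq> F" "\<not> satisfiable F'"
      have "finite F'" using F' fin by (meson finite_subset)
      then obtain G where G: "G \<subseteq> F'" "minimally_unsat G" using exists_mu F' by blast
      have GF: "G \<subseteq> F" using G F' by auto
      have Gu: "\<not> satisfiable G" using G(2) by (simp add: minimally_unsat_def)
      have vG: "var G = var F" using V GF Gu unfolding VMU_def by blast
      have "deficiency G \<ge> 1" using tarsi_def[OF csub[OF GF] G(2)] .
      then have "G \<in> UF F" using GF vG Gu by (simp add: UF_def)
      then show "\<exists>G\<subseteq>F'. minimally_unsat G \<and> G \<in> UF F" using G by blast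
    qed
    obtain G where G: "G \<subseteq> F" "minimally_unsat G" "G \<in> UF F" using key[of F, OF subset_refl unsat] by blast
    have "var G = var F" using G(3) by (simp add: UF_def)
    then have "deficiency G \<le> deficiency F" using defmono[of G F] G(1) by simp
    moreover have "deficiency G \<ge> 1" using G(3) by (simp add: UF_def)
    ultimately have "F \<in> UF F" using unsat by (simp add: UF_def)
    moreover have "\<forall>F'\<in>UF F. (\<not> (\<exists>F''\<in>UF F. F'' \<subset> F')) \<longrightarrow> minimally_unsat F'"
    proof (intro ballI impI)
      fix F' assume F': "F' \<in> UF F" "\<not> (\<exists>F''\<in>UF F. F'' \<subset> F')"
      then obtain G' where G': "G' \<subseteq> F'" "minimally_unsat G'" "G' \<in> UF F"
      proof -
        have "F' \<subseteq> F" "\<not> satisfiable F'" using F'(1) by (simp_all add: UF_def)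
        then show ?thesis using key[of F'] that by blast
      qed
      have "\<not> G' \<subset> F'" using F'(2) G'(3) by blast
      then have "G' = F'" using G'(1) by blast
      then show "minimally_unsat F'" using G' by simp
    qed
    ultimately show "F \<in> UF F \<and> (\<forall>F'\<in>UF F. (\<not> (\<exists>F''\<in>UF F. F'' \<subset> F')) \<longrightarrow> minimally_unsat F')"
      by blast
  next
    assume R: "F \<in> UF F \<and> (\<forall>F'\<in>UF F. (\<not> (\<exists>F''\<in>UF F. F'' \<subset> F')) \<longrightarrow> minimally_unsat F')"
    have FU: "F \<in> UF F" and hyp: "\<And>F'. F' \<in> UF F \<Longrightarrow> \<not> (\<exists>F''\<in>UF F. F'' \<subset> F') \<Longrightarrow> minimally_unsat F'"
      using conjunct1[OF R] conjunct2[OF R] by blast+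
    have unsat: "\<not> satisfiable F" using FU by (simp add: UF_def)
    have "var G = var F" if GF: "G \<subseteq> F" and Gu: "\<not> satisfiable G" for G
    proof (rule ccontr)
      assume vne: "var G \<noteq> var F"
      have vsub: "var G \<subseteq> var F" using var_mono[OF GF] .
      define Fam where "Fam = {X. G \<subseteq> X \<and> X \<subseteq> F \<and> var X = var F \<and> deficiency X \<ge> 1}"
      have "F \<in> Fam" using FU GF by (simp add: Fam_def UF_def)
      then obtain X where X: "X \<in> Fam" and Xmin: "\<forall>Y. Y \<in> Fam \<longrightarrow> card X \<le> card Y"
        using ex_has_least_nat[of "\<lambda>X. X \<in> Fam" F card] by blast
      have XF: "X \<subseteq> F" and GX: "G \<subseteq> X" and vX: "var X = var F" and dX: "deficiency X \<ge> 1"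
        using X by (auto simp: Fam_def)
      have finX: "finite X" using XF fin by (meson finite_subset)
      have "\<not> satisfiable X" using sat_mono[OF GX] Gu by blast
      then have XU: "X \<in> UF F" using XF vX dX by (simp add: UF_def)
      obtain M where M: "M \<in> UF F \<and> M \<subseteq> X"
        and Mmin: "\<forall>N. N \<in> UF F \<and> N \<subseteq> X \<longrightarrow> card M \<le> card N"
        using ex_has_least_nat[of "\<lambda>M. M \<in> UF F \<and> M \<subseteq> X" X card] XU by blast
      have MX: "M \<subseteq> X" using M by blast
      have finM: "finite M" using MX finX by (meson finite_subset)
      have "\<not> (\<exists>F''\<in>UF F. F'' \<subset> M)"
      proof
        assume "\<exists>F''\<in>UF F. F'' \<subset> M"
        then obtain N where "N \<in> UF F" "N \<subset> M" by blast
        moreover have "card N < card M" using \<open>N \<subset> M\<close> finM by (rule psubset_card_mono[rotated])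
        moreover have "N \<subseteq> X" using \<open>N \<subset> M\<close> MX by blast
        ultimately have "card M \<le> card N" "card N < card M" using Mmin by blast+
        then show False by linarith
      qed
      then have Mmu: "minimally_unsat M" using hyp M by blast
      have MF: "M \<subseteq> F" and vM: "var M = var F" and dM: "deficiency M \<ge> 1"
        using M by (auto simp: UF_def)
      have "var (M \<union> G) = var F" using vM vsub by (simp add: var_Un Un_absorb2)
      moreover have "deficiency M \<le> deficiency (M \<union> G)"
        using defmono[of M "M \<union> G"] MF GF vM \<open>var (M \<union> G) = var F\<close> by auto
      ultimately have MGF: "M \<union> G \<in> Fam" using MF GF dM by (simp add: Fam_def)
      have "M \<union> G \<subseteq> X" using MX GX by auto
      moreover have "card X \<le> card (M \<union> G)" using Xmin MGF by blast
      moreover have "card (M \<union> G) \<le> card X" using \<open>M \<union> G \<subseteq> X\<close> finX by (rule card_mono[rotated])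
      ultimately have XMG: "X = M \<union> G" using finX card_subset_eq[of X "M \<union> G"] by simp
      obtain C where C: "C \<in> M" "C \<notin> G"
      proof -
        have "\<not> M \<subseteq> G"
        proof
          assume "M \<subseteq> G"
          then have "var M \<subseteq> var G" by (rule var_mono)
          then show False using vM vsub vne by blast
        qed
        then show ?thesis using that by blast
      qed
      obtain D where D: "D \<in> G" "D \<notin> M"
      proof -
        have "\<not> G \<subseteq> M"
        proof
          assume "G \<subseteq> M"
          then have "G \<subseteq> M - {C}" using C by auto
          moreover have "satisfiable (M - {C})" using Mmu C by (simp add: minimally_unsat_def)
          ultimately show False using sat_mono Gu by blast
        qed
        then show ?thesis using that by blast
      qed
      define X' where "X' = X - {C}"
      have cX: "card M + 1 \<le> card X"
      proof -
        have "insert D M \<subseteq> X" using XMG D by auto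
        then have "card (insert D M) \<le> card X" using finX by (intro card_mono)
        then show ?thesis using D finM by simp
      qed
      have cX': "card X' = card X - 1" unfolding X'_def using XMG C finX by simp
      have "var (M - {C}) \<subseteq> var X'" unfolding X'_def XMG by (rule var_mono) auto
      moreover have "var X' \<subseteq> var F" unfolding X'_def using XF by (intro var_mono) auto
      ultimately have vX': "var X' = var F" using mu_var_remove[OF Mmu C(1)] vM by blast
      have "int (card M) - int (card (var F)) \<ge> 1"
        using dM vM by (simp add: deficiency_def c_clauses_def n_vars_def)
      then have "card (var F) + 1 \<le> card X'" using cX cX' by linarith
      then have "deficiency X' \<ge> 1" using vX' by (simp add: deficiency_def c_clauses_def n_vars_def)
      moreover have "G \<subseteq> X'" unfolding X'_def using GX C(2) by blast
      moreover have "X' \<subseteq> F" unfolding X'_def using XF by blast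
      ultimately have XFam: "X' \<in> Fam" using vX' unfolding Fam_def by blast
      have "0 < card X" using cX by linarith
      then have lt: "card X' < card X" unfolding cX' by (intro diff_less) auto
      have "card X \<le> card X'" using Xmin[rule_format, OF XFam] .
      from le_less_trans[OF this lt] show False by (rule notE[OF less_irrefl])
    qed
    then show "VMU F" using unsat unfolding VMU_def by blast
  qed
qed

end
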